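(* Let $\tau$ be a lozenge tiling of a triangular region $T=T_d(I)$ and let $\sigma$ be an $n$-cycle of lozenges in $\tau$. Then the twist $\tau'$ of $\sigma$ in $\tau$ satisfies $\operatorname{msgn}(\tau')=(-1)^{n-1}\operatorname{msgn}(\tau)$.
   Context: $\mathcal T_d$ is an equilateral triangle of side length $d$ subdivided into unit triangles, upward ones labeled by degree $d-1$ monomials in $K[x,y,z]$, downward ones by degree $d-2$ monomials ($x^{d-1}$ top, $y^{d-1}$ bottom-left, $z^{d-1}$ bottom-right; an upward triangle sharing an edge with a downward one has label the downward label times a variable). For a monomial ideal $I$, $T_d(I)$ is the set of unit triangles whose labels are not in $I$. A lozenge is a union of two unit triangles sharing an edge; a lozenge tiling covers each unit triangle exactly once. Order monomials by graded reverse-lexicographic order; let $B_1,B_2,\dots$ be the downward and $W_1,W_2,\dots$ the upward triangles of $T$ in that order. A tiling $\tau$ determines the permutation $\pi$ with $B_i$ and $W_{\pi(i)}$ in a common lozenge, and $\operatorname{msgn}(\tau)=\operatorname{sgn}(\pi)$. An $n$-cycle of lozenges in $\tau$ is an ordered collection of distinct lozenges $\ell_1,\dots,\ell_n$ of $\tau$ such that the downward triangle of $\ell_i$ shares an edge with the upward triangle of $\ell_{i+1}$ for $1\le i<n$ and the downward triangle of $\ell_n$ shares an edge with the upward triangle of $\ell_1$. The twist of this cycle in $\tau$ is the tiling obtained by replacing $\ell_1,\dots,\ell_n$ by the lozenges formed by the downward triangle of $\ell_i$ and the upward triangle of $\ell_{i+1}$ ($1\le i<n$) and by the downward triangle of $\ell_n$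 and the upward triangle of $\ell_1$. *)

theory Defs
  imports "HOL-Combinatorics.Permutations"
begin

text \<open>A monomial x^a y^b z^c in K[x,y,z] is represented by its exponent triple (a,b,c).\<close>
type_synonym monom = "nat \<times> nat \<times> nat"

definition mdeg :: "monom \<Rightarrow> nat" where
  "mdeg m = (case m of (a, b, c) \<Rightarrow> a + b + c)"

definition mmult :: "monom \<Rightarrow> monom \<Rightarrow> monom" where
  "mmult m e = (case m of (a, b, c) \<Rightarrow> case e of (a', b', c') \<Rightarrow> (a + a', b + b', c + c'))"

text \<open>A monomial ideal is determined by the set of monomials it contains; this set is
  closed under multiplication by arbitrary monomials.\<close>
definition monomial_ideal :: "monom set \<Rightarrow> bool" where
  "monomial_ideal I \<longleftrightarrow> (\<forall>m \<in> I. \<forall>e. mmult m e \<in> I)"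

definition grevlex_gt :: "monom \<Rightarrow> monom \<Rightarrow> bool" where
  "grevlex_gt m m' = (case m of (a, b, c) \<Rightarrow> case m' of (a', b', c') \<Rightarrow>
     (a + b + c > a' + b' + c') \<or>
     (a + b + c = a' + b' + c' \<and> (c < c' \<or> (c = c' \<and> b < b'))))"

text \<open>Downward triangles of T_d(I): labels of degree d-2 not in I;
  upward triangles: labels of degree d-1 not in I.\<close>
definition downs :: "nat \<Rightarrow> monom set \<Rightarrow> monom set" where
  "downs d I = {m. mdeg m + 2 = d \<and> m \<notin> I}"

definition ups :: "nat \<Rightarrow> monom set \<Rightarrow> monom set" where
  "ups d I = {m. mdeg m + 1 = d \<and> m \<notin> I}"

text \<open>The downward triangle labelled b shares an edge with the upward triangle labelled w
  iff w = b times a variable.\<close>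
definition adj :: "monom \<Rightarrow> monom \<Rightarrow> bool" where
  "adj b w \<longleftrightarrow> w = mmult b (1,0,0) \<or> w = mmult b (0,1,0) \<or> w = mmult b (0,0,1)"

text \<open>A lozenge is (downward label, upward label) of two adjacent unit triangles.
  A lozenge tiling of T_d(I) is a set of lozenges inside T_d(I) covering every unit triangle
  exactly once.\<close>
definition is_tiling :: "nat \<Rightarrow> monom set \<Rightarrow> (monom \<times> monom) set \<Rightarrow> bool" where
  "is_tiling d I \<tau> \<longleftrightarrow>
     (\<forall>(b, w) \<in> \<tau>. b \<in> downs d I \<and> w \<in> ups d I \<and> adj b w) \<and>
     (\<forall>b \<in> downs d I. \<exists>!w. (b, w) \<in> \<tau>) \<and>
     (\<forall>w \<in> ups d I. \<exists>!b. (b, w) \<in> \<tau>)"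

text \<open>Position (0-based) of m in S listed in decreasing grevlex order.\<close>
definition rank :: "monom set \<Rightarrow> monom \<Rightarrow> nat" where
  "rank S m = card {m' \<in> S. grevlex_gt m' m}"

text \<open>The permutation pi (on 0-based indices) with B_i and W_{pi(i)} in a common lozenge.\<close>
definition tiling_perm :: "nat \<Rightarrow> monom set \<Rightarrow> (monom \<times> monom) set \<Rightarrow> nat \<Rightarrow> nat" where
  "tiling_perm d I \<tau> i =
     (if \<exists>b w. (b, w) \<in> \<tau> \<and> rank (downs d I) b = i
      then (THE j. \<exists>b w. (b, w) \<in> \<tau> \<and> rank (downs d I) b = i \<and> rank (ups d I) w = j)
      else i)"

definition msgn :: "nat \<Rightarrow> monom set \<Rightarrow> (monom \<times> monom) set \<Rightarrow> int" where
  "msgn d I \<tau> = sign (tiling_perm d I \<tau>)"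

definition is_lozenge_cycle :: "(monom \<times> monom) set \<Rightarrow> (monom \<times> monom) list \<Rightarrow> bool" where
  "is_lozenge_cycle \<tau> ls \<longleftrightarrow>
     ls \<noteq> [] \<and> distinct ls \<and> set ls \<subseteq> \<tau> \<and>
     (\<forall>i < length ls. adj (fst (ls ! i)) (snd (ls ! ((i + 1) mod length ls))))"

definition twist :: "(monom \<times> monom) set \<Rightarrow> (monom \<times> monom) list \<Rightarrow> (monom \<times> monom) set" where
  "twist \<tau> ls = (\<tau> - set ls) \<union>
     {(fst (ls ! i), snd (ls ! ((i + 1) mod length ls))) | i. i < length ls}"

end

theory Submission
  imports Defs "HOL-Combinatorics.Cycles"
begin

lemma gt_irrefl: "\<not> grevlex_gt m m"
  by (cases m) (auto simp: grevlex_gt_def)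

lemma gt_trans: "grevlex_gt a b \<Longrightarrow> grevlex_gt b c \<Longrightarrow> grevlex_gt a c"
  by (cases a; cases b; cases c) (auto simp: grevlex_gt_def)

lemma gt_total: "mdeg a = mdeg b \<Longrightarrow> a \<noteq> b \<Longrightarrow> grevlex_gt a b \<or> grevlex_gt b a"
  by (cases a; cases b) (auto simp: grevlex_gt_def mdeg_def)

lemma finite_deg: "finite {m. mdeg m + k = d \<and> P m}"
proof -
  have "{m. mdeg m + k = d \<and> P m} \<subseteq> {..d} \<times> {..d} \<times> {..d}"
    by (auto simp: mdeg_def)
  then show ?thesis by (rule finite_subset) auto
qed

lemma finite_downs: "finite (downs d I)" unfolding downs_def by (rule finite_deg)
lemma finite_ups: "finite (ups d I)" unfolding ups_def by (rule finite_deg)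

lemma rank_less:
  assumes "finite S" "m \<in> S" "m' \<in> S" "grevlex_gt m m'"
  shows "rank S m < rank S m'"
proof -
  have "{x\<in>S. grevlex_gt x m} \<subset> {x\<in>S. grevlex_gt x m'}"
    using assms gt_trans gt_irrefl by blast
  then show ?thesis unfolding rank_def using assms(1) by (simp add: psubset_card_mono)
qed

lemma rank_inj:
  assumes "finite S" "\<And>a b. a \<in> S \<Longrightarrow> b \<in> S \<Longrightarrow> mdeg a = mdeg b"
  shows "inj_on (rank S) S"
proof (rule inj_onI)
  fix a b assume ab: "a \<in> S" "b \<in> S" "rank S a = rank S b"
  show "a = b"
  proof (rule ccontr)
    assume "a \<noteq> b"
    then have "grevlex_gt a b \<or> grevlex_gt b a" using gt_total assms(2) ab by blast
    then show False using rank_less[OF assms(1)] ab by fastforce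
  qed
qed

lemma rank_image:
  assumes "finite S" "\<And>a b. a \<in> S \<Longrightarrow> b \<in> S \<Longrightarrow> mdeg a = mdeg b"
  shows "rank S ` S = {..<card S}"
proof -
  have sub: "rank S ` S \<subseteq> {..<card S}"
  proof
    fix x assume "x \<in> rank S ` S"
    then obtain m where m: "m \<in> S" "x = rank S m" by blast
    have "{y\<in>S. grevlex_gt y m} \<subset> S" using m gt_irrefl by blast
    then show "x \<in> {..<card S}" using m assms(1) unfolding rank_def by (simp add: psubset_card_mono)
  qed
  have "card (rank S ` S) = card {..<card S}"
    using card_image[OF rank_inj[OF assms]] by simp
  then show ?thesis using sub by (simp add: card_subset_eq)
qed

lemma rank_image_downs: "rank (downs d I) ` downs d I = {..<card (downs d I)}"
  by (rule rank_image[OF finite_downs]) (auto simp: downs_def)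
lemma rank_image_ups: "rank (ups d I) ` ups d I = {..<card (ups d I)}"
  by (rule rank_image[OF finite_ups]) (auto simp: ups_def)
lemma rank_inj_downs: "inj_on (rank (downs d I)) (downs d I)"
  by (rule rank_inj[OF finite_downs]) (auto simp: downs_def)
lemma rank_inj_ups: "inj_on (rank (ups d I)) (ups d I)"
  by (rule rank_inj[OF finite_ups]) (auto simp: ups_def)

lemma tp_in:
  assumes fstD: "\<forall>p \<in> \<tau>. fst p \<in> downs d I"
    and uniq: "\<forall>b \<in> downs d I. \<exists>!w. (b, w) \<in> \<tau>"
    and bw: "(b, w) \<in> \<tau>"
  shows "tiling_perm d I \<tau> (rank (downs d I) b) = rank (ups d I) w"
proof -
  have bD: "b \<in> downs d I" using fstD bw by auto
  have "(THE j. \<exists>b' w'. (b', w') \<in> \<tau> \<and> rank (downs d I) b' = rank (downs d I) b \<and> rank (ups d I) w' = j)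
        = rank (ups d I) w"
  proof (rule the_equality)
    show "\<exists>b' w'. (b', w') \<in> \<tau> \<and> rank (downs d I) b' = rank (downs d I) b \<and> rank (ups d I) w' = rank (ups d I) w"
      using bw by blast
  next
    fix j assume "\<exists>b' w'. (b', w') \<in> \<tau> \<and> rank (downs d I) b' = rank (downs d I) b \<and> rank (ups d I) w' = j"
    then obtain b' w' where h: "(b', w') \<in> \<tau>" "rank (downs d I) b' = rank (downs d I) b" "rank (ups d I) w' = j" by blast
    have "b' \<in> downs d I" using fstD h by auto
    then have "b' = b" using h(2) bD rank_inj_downs by (auto dest: inj_onD)
    then have "w' = w" using uniq bD h(1) bw by blast
    then show "j = rank (ups d I) w" using h by simp
  qed
  moreover have "\<exists>b' w'. (b', w') \<in> \<tau> \<and> rank (downs d I) b' = rank (downs d I) b" using bw by blast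
  ultimately show ?thesis unfolding tiling_perm_def by (simp only: if_True)
qed

lemma tp_out:
  assumes fstD: "\<forall>p \<in> \<tau>. fst p \<in> downs d I"
    and "i \<notin> rank (downs d I) ` downs d I"
  shows "tiling_perm d I \<tau> i = i"
  using assms unfolding tiling_perm_def by force

lemma sign_cycle: "distinct cs \<Longrightarrow> sign (cycle_of_list cs) = (-1) ^ (length cs - 1)"
proof (induction cs rule: cycle_of_list.induct)
  case (1 i j cs)
  have "sign (cycle_of_list (i # j # cs)) = sign (transpose i j) * sign (cycle_of_list (j # cs))"
    by (simp add: sign_compose permutation_swap_id permutation_of_cycle)
  also have "\<dots> = - ((-1) ^ (length cs))" using 1 by (simp add: sign_swap_id)
  finally show ?case by (simp only: cycle_of_list.simps) simp
qed (auto simp: sign_def evenperm_id)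

lemma tp_permutes:
  assumes T: "is_tiling d I \<tau>"
  shows "tiling_perm d I \<tau> permutes {..<card (downs d I)}"
proof -
  let ?D = "downs d I" and ?U = "ups d I" and ?p = "tiling_perm d I \<tau>"
  have fstD: "\<forall>p \<in> \<tau>. fst p \<in> ?D" and uniq: "\<forall>b \<in> ?D. \<exists>!w. (b, w) \<in> \<tau>"
    and inU: "\<forall>p \<in> \<tau>. snd p \<in> ?U" and uniqU: "\<forall>w \<in> ?U. \<exists>!b. (b, w) \<in> \<tau>"
    using T unfolding is_tiling_def by auto
  have img: "?p ` (rank ?D ` ?D) = rank ?U ` ?U"
  proof
    show "?p ` (rank ?D ` ?D) \<subseteq> rank ?U ` ?U"
    proof
      fix y assume "y \<in> ?p ` (rank ?D ` ?D)"
      then obtain b where b: "b \<in> ?D" "y = ?p (rank ?D b)" by blast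
      then obtain w where w: "(b, w) \<in> \<tau>" using uniq by blast
      then show "y \<in> rank ?U ` ?U" using tp_in[OF fstD uniq w] b inU by force
    qed
  next
    show "rank ?U ` ?U \<subseteq> ?p ` (rank ?D ` ?D)"
    proof
      fix y assume "y \<in> rank ?U ` ?U"
      then obtain w where w: "w \<in> ?U" "y = rank ?U w" by blast
      then obtain b where b: "(b, w) \<in> \<tau>" using uniqU by blast
      then show "y \<in> ?p ` (rank ?D ` ?D)" using tp_in[OF fstD uniq b] w fstD by force
    qed
  qed
  have inj: "inj_on ?p (rank ?D ` ?D)"
  proof (rule inj_onI)
    fix x y assume "x \<in> rank ?D ` ?D" "y \<in> rank ?D ` ?D" and e: "?p x = ?p y"
    then obtain b1 b2 where b: "b1 \<in> ?D" "x = rank ?D b1" "b2 \<in> ?D" "y = rank ?D b2" by blast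
    obtain w1 w2 where w: "(b1, w1) \<in> \<tau>" "(b2, w2) \<in> \<tau>" using uniq b by blast
    have "rank ?U w1 = rank ?U w2" using e b tp_in[OF fstD uniq w(1)] tp_in[OF fstD uniq w(2)] by simp
    moreover have "w1 \<in> ?U" "w2 \<in> ?U" using w inU by auto
    ultimately have "w1 = w2" using rank_inj_ups by (auto dest: inj_onD)
    then have "b1 = b2" using uniqU w \<open>w1 \<in> ?U\<close> by blast
    then show "x = y" using b by simp
  qed
  have "bij_betw ?p (rank ?D ` ?D) (rank ?U ` ?U)" using inj img by (simp add: bij_betw_def)
  then have "card (rank ?D ` ?D) = card (rank ?U ` ?U)" by (rule bij_betw_same_card)
  then have cd: "card ?D = card ?U" using rank_image_downs rank_image_ups by (metis card_lessThan)
  have bij: "bij_betw ?p {..<card ?D} {..<card ?D}"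
    using \<open>bij_betw ?p _ _\<close> rank_image_downs[of d I] rank_image_ups[of d I] cd by simp
  show ?thesis
  proof (rule bij_imp_permutes[OF bij])
    fix x assume "x \<notin> {..<card ?D}"
    then show "?p x = x" using tp_out[OF fstD] rank_image_downs by metis
  qed
qed

theorem lemma4p1:
  fixes d :: nat and I :: "monom set" and \<tau> :: "(monom \<times> monom) set"
    and \<sigma> :: "(monom \<times> monom) list"
  assumes "monomial_ideal I"
    and T: "is_tiling d I \<tau>"
    and C: "is_lozenge_cycle \<tau> \<sigma>"
  shows "msgn d I (twist \<tau> \<sigma>) = (-1) ^ (length \<sigma> - 1) * msgn d I \<tau>"
proof -
  let ?D = "downs d I" and ?U = "ups d I" and ?p = "tiling_perm d I \<tau>"
  let ?rD = "rank ?D" and ?rU = "rank ?U"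
  let ?n = "length \<sigma>"
  let ?\<tau>' = "twist \<tau> \<sigma>"
  define b where "b i = fst (\<sigma> ! i)" for i
  define w where "w i = snd (\<sigma> ! i)" for i
  define nx where "nx i = (i + 1) mod ?n" for i
  have fstD: "\<forall>p \<in> \<tau>. fst p \<in> ?D" and uniq: "\<forall>b \<in> ?D. \<exists>!w. (b, w) \<in> \<tau>"
    using T unfolding is_tiling_def by auto
  have ne: "\<sigma> \<noteq> []" and dist: "distinct \<sigma>" and sub: "set \<sigma> \<subseteq> \<tau>"
    using C unfolding is_lozenge_cycle_def by auto
  have npos: "?n > 0" using ne by simp
  have nx_lt: "i < ?n \<Longrightarrow> nx i < ?n" for i using npos by (simp add: nx_def)
  have sig_in: "i < ?n \<Longrightarrow> (b i, w i) \<in> \<tau>" for i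
    using sub nth_mem[of i \<sigma>] by (auto simp: b_def w_def)
  have bD: "i < ?n \<Longrightarrow> b i \<in> ?D" for i using sig_in fstD by force
  have binj: "i < ?n \<Longrightarrow> j < ?n \<Longrightarrow> b i = b j \<Longrightarrow> i = j" for i j
  proof -
    assume ij: "i < ?n" "j < ?n" "b i = b j"
    then have "w i = w j" using uniq bD sig_in by metis
    then have "\<sigma> ! i = \<sigma> ! j" using ij by (simp add: b_def w_def prod_eq_iff)
    then show "i = j" using dist ij nth_eq_iff_index_eq by blast
  qed
  define cs where "cs = map (\<lambda>p. ?rD (fst p)) \<sigma>"
  have cs_nth: "i < ?n \<Longrightarrow> cs ! i = ?rD (b i)" for i by (simp add: cs_def b_def)
  have cs_len: "length cs = ?n" by (simp add: cs_def)
  have rDeq: "i < ?n \<Longrightarrow> j < ?n \<Longrightarrow> ?rD (b i) = ?rD (b j) \<Longrightarrow> i = j" for i j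
    using bD binj rank_inj_downs[of d I] by (meson inj_onD)
  have cs_dist: "distinct cs"
    unfolding distinct_conv_nth cs_len using cs_nth rDeq by metis
  have cyc: "i < ?n \<Longrightarrow> cycle_of_list cs (cs ! i) = cs ! nx i" for i
  proof -
    assume i: "i < ?n"
    have "map (cycle_of_list cs) cs = rotate 1 cs"
      using cyclic_rotation[of cs 1] cs_dist by simp
    then have "cycle_of_list cs (cs ! i) = rotate 1 cs ! i"
      by (metis cs_len i nth_map)
    also have "\<dots> = cs ! nx i" using i cs_len nth_rotate[of i cs 1] by (simp add: nx_def add.commute del: rotate1_length01)
    finally show ?thesis .
  qed
  have tw: "?\<tau>' = (\<tau> - set \<sigma>) \<union> {(b i, w (nx i)) | i. i < ?n}"
    by (simp add: twist_def b_def w_def nx_def)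
  have fstD': "\<forall>p \<in> ?\<tau>'. fst p \<in> ?D" using tw fstD bD by auto
  have new_in: "i < ?n \<Longrightarrow> (b i, w (nx i)) \<in> ?\<tau>'" for i using tw by blast
  have old_in: "(c, v) \<in> \<tau> \<Longrightarrow> (\<forall>i < ?n. c \<noteq> b i) \<Longrightarrow> (c, v) \<in> ?\<tau>'" for c v
  proof -
    assume h: "(c, v) \<in> \<tau>" "\<forall>i < ?n. c \<noteq> b i"
    have "(c, v) \<notin> set \<sigma>"
    proof
      assume "(c, v) \<in> set \<sigma>"
      then obtain i where "i < ?n" "\<sigma> ! i = (c, v)" by (metis in_set_conv_nth)
      then show False using h by (metis b_def fst_conv)
    qed
    then show ?thesis using tw h by blast
  qed
  have uniq': "\<forall>c \<in> ?D. \<exists>!v. (c, v) \<in> ?\<tau>'"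
  proof
    fix c assume cD: "c \<in> ?D"
    show "\<exists>!v. (c, v) \<in> ?\<tau>'"
    proof (cases "\<exists>i < ?n. c = b i")
      case True
      then obtain i where i: "i < ?n" "c = b i" by blast
      show ?thesis
      proof (rule ex1I[of _ "w (nx i)"])
        show "(c, w (nx i)) \<in> ?\<tau>'" using new_in i by simp
      next
        fix v assume v: "(c, v) \<in> ?\<tau>'"
        show "v = w (nx i)"
        proof (cases "(c, v) \<in> \<tau> - set \<sigma>")
          case True
          then have "v = w i" using uniq cD sig_in i by blast
          then have "(c, v) = \<sigma> ! i" using i by (simp add: b_def w_def)
          moreover have "\<sigma> ! i \<in> set \<sigma>" using i by simp
          ultimately show ?thesis using True by simp
        next
          case False
          then have "(c, v) \<in> {(b i, w (nx i)) | i. i < ?n}" using v tw by blast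
          then obtain j where j: "j < ?n" "(c, v) = (b j, w (nx j))" by blast
          then have "j = i" using binj i by simp
          then show ?thesis using j by simp
        qed
      qed
    next
      case False
      then obtain v where v: "(c, v) \<in> \<tau>" using uniq cD by blast
      show ?thesis
      proof (rule ex1I[of _ v])
        show "(c, v) \<in> ?\<tau>'" using old_in v False by blast
      next
        fix v' assume "(c, v') \<in> ?\<tau>'"
        then have "(c, v') \<in> \<tau>" using tw False by auto
        then show "v' = v" using uniq cD v by blast
      qed
    qed
  qed
  have comp: "tiling_perm d I ?\<tau>' = ?p \<circ> cycle_of_list cs"
  proof
    fix x
    show "tiling_perm d I ?\<tau>' x = (?p \<circ> cycle_of_list cs) x"
    proof (cases "x \<in> ?rD ` ?D")
      case False
      have "x \<notin> set cs" using False bD by (auto simp: in_set_conv_nth cs_len cs_nth)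
      then have "cycle_of_list cs x = x" by (rule id_outside_supp)
      then show ?thesis using False tp_out[OF fstD] tp_out[OF fstD'] by simp
    next
      case True
      then obtain c where c: "c \<in> ?D" "x = ?rD c" by blast
      show ?thesis
      proof (cases "\<exists>i < ?n. c = b i")
        case True
        then obtain i where i: "i < ?n" "c = b i" by blast
        have "tiling_perm d I ?\<tau>' x = ?rU (w (nx i))"
          using tp_in[OF fstD' uniq' new_in[OF i(1)]] c i by simp
        moreover have "cycle_of_list cs x = ?rD (b (nx i))"
          using cyc[OF i(1)] cs_nth i c nx_lt by simp
        moreover have "?p (?rD (b (nx i))) = ?rU (w (nx i))"
          using tp_in[OF fstD uniq sig_in[OF nx_lt[OF i(1)]]] .
        ultimately show ?thesis by simp
      next
        case False
        obtain v where v: "(c, v) \<in> \<tau>" using uniq c by blast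
        have "x \<notin> set cs"
        proof
          assume "x \<in> set cs"
          then obtain i where "i < ?n" "x = ?rD (b i)" by (auto simp: in_set_conv_nth cs_len cs_nth)
          then have "c = b i" using c bD[OF \<open>i < ?n\<close>] rank_inj_downs[of d I] by (metis inj_onD)
          then show False using False \<open>i < ?n\<close> by blast
        qed
        then have "cycle_of_list cs x = x" by (rule id_outside_supp)
        moreover have "tiling_perm d I ?\<tau>' x = ?rU v"
          using tp_in[OF fstD' uniq' old_in[OF v]] False c by simp
        moreover have "?p x = ?rU v" using tp_in[OF fstD uniq v] c by simp
        ultimately show ?thesis by simp
      qed
    qed
  qed
  have "permutation ?p" using tp_permutes[OF T] permutation_permutes by blast
  then have "sign (tiling_perm d I ?\<tau>') = sign ?p * sign (cycle_of_list cs)"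
    by (simp add: comp sign_compose permutation_of_cycle)
  also have "sign (cycle_of_list cs) = (-1) ^ (?n - 1)" using sign_cycle[OF cs_dist] cs_len by simp
  finally show ?thesis by (simp add: msgn_def)
qed

end
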